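(* Let $\mu\in(0,\tfrac12]$ and consider the spatial circular restricted three-body problem in the rotating frame, with primaries fixed at $(-\mu,0,0)$ and $(1-\mu,0,0)$. Let $(x_{eq},0,0)$ be any of the three collinear Lagrange points $L_1,L_2,L_3$, and set $$c:=\frac{1-\mu}{|x_{eq}+\mu|^3}+\frac{\mu}{|x_{eq}-1+\mu|^3}.$$ Define the vertical frequency $\omega_v:=\sqrt{c}$ and the planar frequency $$\omega_p:=\Big(\beta_1+\sqrt{\beta_1^2+\beta_2}\Big)^{1/2},\qquad \beta_1=2-\tfrac12\big(U_{xx}^{eq}+U_{yy}^{eq}\big),\quad \beta_2=-U_{xx}^{eq}U_{yy}^{eq},$$ where $U_{xx}^{eq}=2c+1$, $U_{yy}^{eq}=1-c$ (so that the linearized flow at the Lagrange point has eigenvalues $\pm\lambda$ real, $\pm i\omega_p$, $\pm i\omega_v$). Then $$\omega_v<\omega_p<2\omega_v.$$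
   Context: The equations of motion of the spatial circular restricted three-body problem are $\ddot x=2\dot y+x-(1-\mu)\frac{x+\mu}{r_1^3}-\mu\frac{x-1+\mu}{r_2^3}$, $\ddot y=-2\dot x+y-\big(\frac{1-\mu}{r_1^3}+\frac{\mu}{r_2^3}\big)y$, $\ddot z=-\big(\frac{1-\mu}{r_1^3}+\frac{\mu}{r_2^3}\big)z$, with $r_1=((x+\mu)^2+y^2+z^2)^{1/2}$, $r_2=((x-1+\mu)^2+y^2+z^2)^{1/2}$. The collinear Lagrange points are the equilibria on the $x$-axis. With $U(x,y,z)=\tfrac12(x^2+y^2)+\frac{1-\mu}{r_1}+\frac{\mu}{r_2}$, the linearization at $(x_{eq},0,0)$ is $\ddot\xi-2\dot\eta=U^{eq}_{xx}\xi$, $\ddot\eta+2\dot\xi=U^{eq}_{yy}\eta$, $\ddot\zeta=U^{eq}_{zz}\zeta$, with $U^{eq}_{xx}=2c+1$, $U^{eq}_{yy}=1-c$, $U^{eq}_{zz}=-c$. *)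

theory Defs
  imports Complex_Main
begin

definition r1 :: "real \<Rightarrow> real \<Rightarrow> real \<Rightarrow> real \<Rightarrow> real" where
  "r1 mu x y z = sqrt ((x + mu)^2 + y^2 + z^2)"

definition r2 :: "real \<Rightarrow> real \<Rightarrow> real \<Rightarrow> real \<Rightarrow> real" where
  "r2 mu x y z = sqrt ((x - 1 + mu)^2 + y^2 + z^2)"

definition accel_x :: "real \<Rightarrow> real \<Rightarrow> real \<Rightarrow> real \<Rightarrow> real \<Rightarrow> real \<Rightarrow> real" where
  "accel_x mu x y z vx vy = 2 * vy + x - (1 - mu) * (x + mu) / (r1 mu x y z)^3
     - mu * (x - 1 + mu) / (r2 mu x y z)^3"

definition accel_y :: "real \<Rightarrow> real \<Rightarrow> real \<Rightarrow> real \<Rightarrow> real \<Rightarrow> real \<Rightarrow> real" where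
  "accel_y mu x y z vx vy = - 2 * vx + y - ((1 - mu) / (r1 mu x y z)^3 + mu / (r2 mu x y z)^3) * y"

definition accel_z :: "real \<Rightarrow> real \<Rightarrow> real \<Rightarrow> real \<Rightarrow> real" where
  "accel_z mu x y z = - ((1 - mu) / (r1 mu x y z)^3 + mu / (r2 mu x y z)^3) * z"

definition equilibrium :: "real \<Rightarrow> real \<Rightarrow> real \<Rightarrow> real \<Rightarrow> bool" where
  "equilibrium mu x y z \<longleftrightarrow>
     r1 mu x y z \<noteq> 0 \<and> r2 mu x y z \<noteq> 0 \<and>
     accel_x mu x y z 0 0 = 0 \<and> accel_y mu x y z 0 0 = 0 \<and> accel_z mu x y z = 0"

definition collinear_lagrange_point :: "real \<Rightarrow> real \<Rightarrow> bool" where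
  "collinear_lagrange_point mu xeq \<longleftrightarrow> equilibrium mu xeq 0 0"

end

theory Submission
  imports Defs
begin

lemma inv1: fixes t :: real assumes "t > 0" shows "1/t^3 < 1 \<longleftrightarrow> t > 1" "1/t^3 > 1 \<longleftrightarrow> t < 1"
proof -
  have "1 < t^3 \<longleftrightarrow> 1 < t" using assms
    by (metis less_le_not_le one_le_power one_less_power order_le_less_trans pos2 power_le_one zero_less_numeral not_le)
  moreover have "t^3 < 1 \<longleftrightarrow> t < 1" using assms
    by (meson less_le_not_le one_le_power power_less_one_iff zero_le_numeral not_le zero_less_numeral order.strict_implies_order less_1_mult)
  ultimately show "1/t^3 < 1 \<longleftrightarrow> t > 1" "1/t^3 > 1 \<longleftrightarrow> t < 1" using assms
    by (simp_all add: divide_less_eq less_divide_eq)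
qed

lemma key:
  fixes a b mu p q :: real
  assumes mu: "0 < mu" "mu < 1" and ab: "a - b = 1" and a0: "a \<noteq> 0" and b0: "b \<noteq> 0"
    and p: "p = 1 / \<bar>a\<bar>^3" and q: "q = 1 / \<bar>b\<bar>^3"
    and eq: "(1-mu)*a*(1-p) + mu*b*(1-q) = 0"
  shows "(1-mu)*p + mu*q > 1"
proof -
  have pa: "p < 1 \<longleftrightarrow> \<bar>a\<bar> > 1" "p > 1 \<longleftrightarrow> \<bar>a\<bar> < 1" using a0 p inv1[of "\<bar>a\<bar>"] by auto
  have qb: "q < 1 \<longleftrightarrow> \<bar>b\<bar> > 1" "q > 1 \<longleftrightarrow> \<bar>b\<bar> < 1" using b0 q inv1[of "\<bar>b\<bar>"] by auto
  consider "a > 0" "b > 0" | "a > 0" "b < 0" | "a < 0" "b < 0" using a0 b0 ab by linarith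
  then show ?thesis
  proof cases
    case 1
    then have "p < 1" using pa(1) ab by auto
    have id: "b*((1-mu)*p + mu*q - 1) = (1-mu)*(1-p)"
      using eq ab by (simp add: algebra_simps)
    have "(1-mu)*(1-p) > 0" using \<open>p<1\<close> mu by simp
    then have "b*((1-mu)*p + mu*q - 1) > 0" using id by simp
    then show ?thesis using 1 by (simp add: zero_less_mult_iff)
  next
    case 2
    then have "p > 1" "q > 1" using pa(2) qb(2) ab by auto
    have "(1-mu)*p > (1-mu)*1" using \<open>p>1\<close> mu by (intro mult_strict_left_mono) auto
    moreover have "mu*q > mu*1" using \<open>q>1\<close> mu by (intro mult_strict_left_mono) auto
    ultimately show ?thesis by simp
  next
    case 3
    then have "q < 1" using qb(1) ab by auto
    have id: "a*((1-mu)*p + mu*q - 1) = - (mu*(1-q))"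
      using eq ab by (simp add: algebra_simps)
    have "mu*(1-q) > 0" using \<open>q<1\<close> mu by simp
    then have "a*((1-mu)*p + mu*q - 1) < 0" using id by simp
    then show ?thesis using 3 by (simp add: mult_less_0_iff)
  qed
qed

theorem mainTheorem1:
  fixes mu xeq c Uxx Uyy beta1 beta2 omega_v omega_p :: real
  assumes "0 < mu" and "mu \<le> 1/2"
    and "collinear_lagrange_point mu xeq"
    and "c = (1 - mu) / \<bar>xeq + mu\<bar>^3 + mu / \<bar>xeq - 1 + mu\<bar>^3"
    and "Uxx = 2 * c + 1" and "Uyy = 1 - c"
    and "beta1 = 2 - (Uxx + Uyy) / 2" and "beta2 = - Uxx * Uyy"
    and "omega_v = sqrt c"
    and "omega_p = sqrt (beta1 + sqrt (beta1^2 + beta2))"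
  shows "omega_v < omega_p \<and> omega_p < 2 * omega_v"
proof -
  define a where "a = xeq + mu"
  define b where "b = xeq - 1 + mu"
  define p where "p = 1 / \<bar>a\<bar>^3"
  define q where "q = 1 / \<bar>b\<bar>^3"
  have E: "\<bar>a\<bar> \<noteq> 0" "\<bar>b\<bar> \<noteq> 0"
    "xeq - (1 - mu) * a / \<bar>a\<bar>^3 - mu * b / \<bar>b\<bar>^3 = 0"
    using assms(3) unfolding collinear_lagrange_point_def equilibrium_def accel_x_def r1_def r2_def
      a_def b_def by auto
  have "(1-mu)*a*(1-p) + mu*b*(1-q) = 0"
  proof -
    have "xeq = (1-mu)*a*p + mu*b*q" using E(3) unfolding p_def q_def by simp
    moreover have "xeq = (1-mu)*a + mu*b" unfolding a_def b_def by (simp add: algebra_simps)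
    ultimately show ?thesis by (simp add: algebra_simps)
  qed
  then have c1: "c > 1" using key[of mu a b p q] assms(1,2,4) E(1,2)
    unfolding p_def q_def a_def b_def by simp
  have b1: "beta1 = 1 - c/2" by (simp add: assms(5-7) field_simps)
  have D: "beta1^2 + beta2 = 9*c^2/4 - 2*c"
    unfolding b1 assms(8,5,6) by (simp add: power2_eq_square algebra_simps)
  define s where "s = sqrt (9*c^2/4 - 2*c)"
  have s0: "s \<ge> 0" and s2: "s^2 = 9*c^2/4 - 2*c"
    unfolding s_def using c1 by (auto simp: power2_eq_square)
  have wp: "omega_p = sqrt (1 - c/2 + s)" using assms(10) b1 D s_def by simp
  have l1: "c < 1 - c/2 + s"
  proof -
    have "(3*c/2 - 1)^2 < s^2" using s2 c1 by (simp add: power2_eq_square algebra_simps)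
    then have "3*c/2 - 1 < s" using s0 by (smt (verit) power_mono)
    then show ?thesis by simp
  qed
  have l2: "1 - c/2 + s < 4*c"
  proof -
    have cc: "c*c > c" using c1 by simp
    have e1: "(9*c/2 - 1)^2 = 81*(c*c)/4 - 9*c + 1" by (simp add: power2_eq_square field_simps)
    have e2: "s^2 = 9*(c*c)/4 - 2*c" using s2 by (simp add: power2_eq_square)
    have "s^2 < (9*c/2 - 1)^2" unfolding e1 e2 using cc c1 by linarith
    then have "s < 9*c/2 - 1" using c1 power2_less_imp_less[of s "9*c/2-1"] by simp
    then show ?thesis by simp
  qed
  have "sqrt c < sqrt (1 - c/2 + s)" using l1 by simp
  moreover have "sqrt (1 - c/2 + s) < sqrt (4*c)" using l2 by simp
  moreover have "sqrt (4*c) = 2 * sqrt c" by (simp add: real_sqrt_mult)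
  ultimately show ?thesis using assms(9) wp by simp
qed

end
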